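(* Let $g:\mathbb{R}^d\to[0,\infty)$ be a log-concave product density, i.e. $g(z)=\prod_{i=1}^d g_i(z_i)$ where each $g_i:\mathbb{R}\to[0,\infty)$ is log-concave and integrable, with $g$ not identically zero. Let $f:\mathbb{R}^d\to(0,\infty)$ be integrable and log-supermodular. Then $f*g$ is log-supermodular: for all $x,y\in\mathbb{R}^d$, \[ (f*g)(x)\,(f*g)(y)\le (f*g)(x\wedge y)\,(f*g)(x\vee y). \]
   Context: For $x,y\in\mathbb{R}^d$, $(x\wedge y)_i=\min(x_i,y_i)$ and $(x\vee y)_i=\max(x_i,y_i)$. A function $u$ on $\mathbb{R}^d$ is log-supermodular if $u(x)u(y)\le u(x\wedge y)u(x\vee y)$ for all $x,y$. A function $h$ is log-concave if $h((1-t)x+ty)\ge h(x)^{1-t}h(y)^t$ for all $x,y$ and $t\in(0,1)$. Convolution: $f*g(x)=\int_{\mathbb{R}^d} f(x-z)g(z)\,dz$. *)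

theory Defs
  imports "HOL-Analysis.Analysis"
begin

definition vmin :: "real^'n \<Rightarrow> real^'n \<Rightarrow> real^'n" where
  "vmin x y = (\<chi> i. min (x $ i) (y $ i))"

definition vmax :: "real^'n \<Rightarrow> real^'n \<Rightarrow> real^'n" where
  "vmax x y = (\<chi> i. max (x $ i) (y $ i))"

definition log_supermodular :: "(real^'n \<Rightarrow> real) \<Rightarrow> bool" where
  "log_supermodular u \<longleftrightarrow> (\<forall>x y. u x * u y \<le> u (vmin x y) * u (vmax x y))"

definition log_concave :: "('a::real_vector \<Rightarrow> real) \<Rightarrow> bool" where
  "log_concave h \<longleftrightarrow> (\<forall>x y t. 0 < t \<and> t < 1 \<longrightarrow>
      h ((1 - t) *\<^sub>R x + t *\<^sub>R y) \<ge> h x powr (1 - t) * h y powr t)"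

definition conv :: "(real^'n \<Rightarrow> real) \<Rightarrow> (real^'n \<Rightarrow> real) \<Rightarrow> real^'n \<Rightarrow> real" where
  "conv f g x = (\<integral>z. f (x - z) * g z \<partial>lborel)"

end

theory Submission
  imports Defs
begin

lemma four_real:
  fixes A B C D :: real
  assumes "0 \<le> A" "0 \<le> B" "A \<le> C" "B \<le> C" "A*B \<le> C*D" "0 \<le> D"
  shows "A + B \<le> C + D"
proof (cases "C = 0")
  case True then show ?thesis using assms by simp
next
  case False
  hence "C > 0" using assms by simp
  have "(C - A) * (C - B) \<ge> 0" using assms by simp
  hence "C * (A + B) \<le> C * (C + D)" using assms by (simp add: algebra_simps)
  thus ?thesis using \<open>C > 0\<close> by simp
qed

lemma four_pt:
  fixes A B C D :: ennreal
  assumes "A \<le> C" "B \<le> C" "A*B \<le> C*D"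
  shows "A + B \<le> C + D"
proof (cases "C = top \<or> D = top")
  case True then show ?thesis by auto
next
  case False
  then obtain c d where cd: "C = ennreal c" "D = ennreal d" "0 \<le> c" "0 \<le> d"
    by (metis ennreal_cases)
  then obtain a b where ab: "A = ennreal a" "B = ennreal b" "0 \<le> a" "0 \<le> b"
    using assms(1,2) by (metis ennreal_cases ennreal_less_top not_le top.extremum_unique)
  have "a \<le> c" "b \<le> c" using assms ab cd by auto
  moreover have "a * b \<le> c * d" using assms(3) ab cd by (simp add: ennreal_mult'[symmetric])
  ultimately have "a + b \<le> c + d" using four_real ab cd by blast
  thus ?thesis using ab cd by (simp add: ennreal_plus[symmetric] del: ennreal_plus)
qed

lemma four_1d:
  fixes a b c d :: "real \<Rightarrow> ennreal"
  assumes [measurable]: "a \<in> borel_measurable borel" "b \<in> borel_measurable borel"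
    "c \<in> borel_measurable borel" "d \<in> borel_measurable borel"
  assumes hyp: "\<And>s t. a s * b t \<le> c (min s t) * d (max s t)"
  shows "(\<integral>\<^sup>+s. a s \<partial>lborel) * (\<integral>\<^sup>+t. b t \<partial>lborel) \<le> (\<integral>\<^sup>+s. c s \<partial>lborel) * (\<integral>\<^sup>+t. d t \<partial>lborel)"
proof -
  have pt0: "a s * b t + a t * b s \<le> c s * d t + c t * d s" if "s \<le> t" for s t
  proof (rule four_pt)
    show "a s * b t \<le> c s * d t" using hyp[of s t] that by simp
    show "a t * b s \<le> c s * d t" using hyp[of t s] that by simp
    have "a s * b t * (a t * b s) = (a s * b s) * (a t * b t)" by (simp add: algebra_simps)
    also have "\<dots> \<le> (c s * d s) * (c t * d t)"
      using hyp[of s s] hyp[of t t] by (intro mult_mono[of "a s * b s" _ "a t * b t"]) auto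
    also have "\<dots> = c s * d t * (c t * d s)" by (simp add: algebra_simps)
    finally show "a s * b t * (a t * b s) \<le> c s * d t * (c t * d s)" .
  qed
  have pt: "a s * b t + a t * b s \<le> c s * d t + c t * d s" for s t
  proof (cases "s \<le> t")
    case True then show ?thesis by (rule pt0)
  next
    case False then show ?thesis using pt0[of t s] by (simp add: add.commute)
  qed
  have eq: "(\<integral>\<^sup>+s. p s \<partial>lborel) * (\<integral>\<^sup>+t. q t \<partial>lborel) + (\<integral>\<^sup>+s. q s \<partial>lborel) * (\<integral>\<^sup>+t. p t \<partial>lborel)
     = (\<integral>\<^sup>+s. (\<integral>\<^sup>+t. p s * q t + p t * q s \<partial>lborel) \<partial>lborel)"
    if [measurable]: "p \<in> borel_measurable borel" "q \<in> borel_measurable borel" for p q :: "real \<Rightarrow> ennreal"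
  proof -
    have "(\<integral>\<^sup>+s. p s \<partial>lborel) * (\<integral>\<^sup>+t. q t \<partial>lborel) + (\<integral>\<^sup>+s. q s \<partial>lborel) * (\<integral>\<^sup>+t. p t \<partial>lborel)
      = (\<integral>\<^sup>+s. p s * (\<integral>\<^sup>+t. q t \<partial>lborel) + q s * (\<integral>\<^sup>+t. p t \<partial>lborel) \<partial>lborel)"
      by (simp add: nn_integral_add nn_integral_multc)
    also have "\<dots> = (\<integral>\<^sup>+s. (\<integral>\<^sup>+t. p s * q t \<partial>lborel) + (\<integral>\<^sup>+t. q s * p t \<partial>lborel) \<partial>lborel)"
      by (simp add: nn_integral_cmult)
    also have "\<dots> = (\<integral>\<^sup>+s. (\<integral>\<^sup>+t. p s * q t + p t * q s \<partial>lborel) \<partial>lborel)"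
      by (intro nn_integral_cong) (simp add: nn_integral_add mult.commute)
    finally show ?thesis .
  qed
  have "(\<integral>\<^sup>+s. a s \<partial>lborel) * (\<integral>\<^sup>+t. b t \<partial>lborel) + (\<integral>\<^sup>+s. a s \<partial>lborel) * (\<integral>\<^sup>+t. b t \<partial>lborel)
     = (\<integral>\<^sup>+s. (\<integral>\<^sup>+t. a s * b t + a t * b s \<partial>lborel) \<partial>lborel)"
    using eq[of a b] by (simp add: mult.commute)
  also have "\<dots> \<le> (\<integral>\<^sup>+s. (\<integral>\<^sup>+t. c s * d t + c t * d s \<partial>lborel) \<partial>lborel)"
    by (intro nn_integral_mono pt)
  also have "\<dots> = (\<integral>\<^sup>+s. c s \<partial>lborel) * (\<integral>\<^sup>+t. d t \<partial>lborel) + (\<integral>\<^sup>+s. c s \<partial>lborel) * (\<integral>\<^sup>+t. d t \<partial>lborel)"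
    using eq[of c d] by (simp add: mult.commute)
  finally have "2 * ((\<integral>\<^sup>+s. a s \<partial>lborel) * (\<integral>\<^sup>+t. b t \<partial>lborel)) \<le> 2 * ((\<integral>\<^sup>+s. c s \<partial>lborel) * (\<integral>\<^sup>+t. d t \<partial>lborel))"
    by (simp add: mult_2)
  thus ?thesis by (subst (asm) ennreal_mult_le_mult_iff) auto
qed

lemma inf_upd: "inf (z(i:=s)) (w(i:=t)) = (inf z w)(i := min s t)" for z w :: "'i \<Rightarrow> real"
  by (auto simp: inf_fun_def inf_min)
lemma sup_upd: "sup (z(i:=s)) (w(i:=t)) = (sup z w)(i := max s t)" for z w :: "'i \<Rightarrow> real"
  by (auto simp: sup_fun_def sup_max)

lemma space_inf: "z \<in> space (PiM I (\<lambda>_. lborel)) \<Longrightarrow> w \<in> space (PiM I (\<lambda>_. lborel))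
   \<Longrightarrow> inf z w \<in> space (PiM I (\<lambda>_. lborel :: real measure))"
  by (auto simp: space_PiM PiE_def extensional_def inf_fun_def)
lemma space_sup: "z \<in> space (PiM I (\<lambda>_. lborel)) \<Longrightarrow> w \<in> space (PiM I (\<lambda>_. lborel))
   \<Longrightarrow> sup z w \<in> space (PiM I (\<lambda>_. lborel :: real measure))"
  by (auto simp: space_PiM PiE_def extensional_def sup_fun_def)

lemma four_pi:
  fixes I :: "'i set"
  assumes "finite I"
  shows "\<And>h1 h2 h3 h4 :: ('i \<Rightarrow> real) \<Rightarrow> ennreal.
    h1 \<in> borel_measurable (PiM I (\<lambda>_. lborel)) \<Longrightarrow> h2 \<in> borel_measurable (PiM I (\<lambda>_. lborel)) \<Longrightarrow>
    h3 \<in> borel_measurable (PiM I (\<lambda>_. lborel)) \<Longrightarrow> h4 \<in> borel_measurable (PiM I (\<lambda>_. lborel)) \<Longrightarrow>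
    (\<And>z w. z \<in> space (PiM I (\<lambda>_. lborel)) \<Longrightarrow> w \<in> space (PiM I (\<lambda>_. lborel)) \<Longrightarrow>
       h1 z * h2 w \<le> h3 (inf z w) * h4 (sup z w)) \<Longrightarrow>
    integral\<^sup>N (PiM I (\<lambda>_. lborel)) h1 * integral\<^sup>N (PiM I (\<lambda>_. lborel)) h2
     \<le> integral\<^sup>N (PiM I (\<lambda>_. lborel)) h3 * integral\<^sup>N (PiM I (\<lambda>_. lborel)) h4"
  using assms
proof (induction I rule: finite_induct)
  case empty
  interpret product_sigma_finite "\<lambda>_. lborel :: real measure" by standard
  have u: "(\<lambda>k. undefined) \<in> space (PiM {} (\<lambda>_. lborel :: real measure))"
    by (simp add: PiM_empty)
  have "inf (\<lambda>k. undefined) (\<lambda>k. undefined) = (\<lambda>k. undefined :: real)"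
       "sup (\<lambda>k. undefined) (\<lambda>k. undefined) = (\<lambda>k. undefined :: real)" by auto
  then show ?case using empty(5)[OF u u] by (simp add: nn_integral_empty)
next
  case (insert i I)
  interpret product_sigma_finite "\<lambda>_. lborel :: real measure" by standard
  define H where "H h x = (\<integral>\<^sup>+y. h (x(i:=y)) \<partial>lborel)" for h :: "('i \<Rightarrow> real) \<Rightarrow> ennreal" and x
  have Hm: "H h \<in> borel_measurable (PiM I (\<lambda>_. lborel))"
    if "h \<in> borel_measurable (PiM (insert i I) (\<lambda>_. lborel))" for h
  proof -
    have "(\<lambda>(x, y). h (x(i:=y))) \<in> borel_measurable (PiM I (\<lambda>_. lborel) \<Otimes>\<^sub>M lborel)"
      using measurable_comp[OF measurable_add_dim[of i I "\<lambda>_. lborel"] that]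
      by (simp add: comp_def case_prod_beta')
    then show ?thesis unfolding H_def
      by (intro lborel.borel_measurable_nn_integral) (simp add: case_prod_beta')
  qed
  have upm: "(\<lambda>y. h (x(i:=y))) \<in> borel_measurable lborel"
    if "h \<in> borel_measurable (PiM (insert i I) (\<lambda>_. lborel))" "x \<in> space (PiM I (\<lambda>_. lborel))" for h x
    using measurable_comp[OF measurable_component_update that(1), OF that(2) \<open>i \<notin> I\<close>]
    by (simp add: comp_def fun_upd_def)
  have eqs: "integral\<^sup>N (PiM (insert i I) (\<lambda>_. lborel)) h = integral\<^sup>N (PiM I (\<lambda>_. lborel)) (H h)"
    if "h \<in> borel_measurable (PiM (insert i I) (\<lambda>_. lborel))" for h
    unfolding H_def by (rule product_nn_integral_insert[OF insert(1,2) that])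
  have "integral\<^sup>N (PiM I (\<lambda>_. lborel)) (H h1) * integral\<^sup>N (PiM I (\<lambda>_. lborel)) (H h2)
     \<le> integral\<^sup>N (PiM I (\<lambda>_. lborel)) (H h3) * integral\<^sup>N (PiM I (\<lambda>_. lborel)) (H h4)"
  proof (rule insert.IH[OF Hm Hm Hm Hm])
    fix z w assume z: "z \<in> space (PiM I (\<lambda>_. lborel :: real measure))"
      and w: "w \<in> space (PiM I (\<lambda>_. lborel :: real measure))"
    show "H h1 z * H h2 w \<le> H h3 (inf z w) * H h4 (sup z w)"
      unfolding H_def
    proof (rule four_1d)
      show "(\<lambda>y. h1 (z(i:=y))) \<in> borel_measurable borel"
        using upm[OF insert.prems(1) z] by (simp add: fun_upd_def)
      show "(\<lambda>y. h2 (w(i:=y))) \<in> borel_measurable borel"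
        using upm[OF insert.prems(2) w] by (simp add: fun_upd_def)
      show "(\<lambda>y. h3 ((inf z w)(i:=y))) \<in> borel_measurable borel"
        using upm[OF insert.prems(3) space_inf[OF z w]] by (simp add: fun_upd_def)
      show "(\<lambda>y. h4 ((sup z w)(i:=y))) \<in> borel_measurable borel"
        using upm[OF insert.prems(4) space_sup[OF z w]] by (simp add: fun_upd_def)
      fix s t
      have zs: "z(i:=s) \<in> space (PiM (insert i I) (\<lambda>_. lborel :: real measure))"
        using z by (auto simp: space_PiM PiE_def extensional_def)
      have wt: "w(i:=t) \<in> space (PiM (insert i I) (\<lambda>_. lborel :: real measure))"
        using w by (auto simp: space_PiM PiE_def extensional_def)
      show "h1 (z(i:=s)) * h2 (w(i:=t)) \<le> h3 ((inf z w)(i:=min s t)) * h4 ((sup z w)(i:=max s t))"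
        using insert.prems(5)[OF zs wt] unfolding inf_upd sup_upd .
    qed
  qed (use insert in auto)
  then show ?case using insert.prems(1-4) by (simp add: eqs)
qed


lemma E_nth: "(\<Sum>b\<in>Basis. f b *\<^sub>R b :: real^'n) $ i = f (axis i 1)"
proof -
  have "(\<Sum>b\<in>Basis. f b *\<^sub>R b :: real^'n) $ i = (\<Sum>b\<in>Basis. f b *\<^sub>R b :: real^'n) \<bullet> axis i 1"
    by (simp add: cart_eq_inner_axis)
  also have "\<dots> = (\<Sum>b\<in>Basis. f b * (b \<bullet> axis i 1))"
    by (simp add: inner_sum_left)
  also have "\<dots> = (\<Sum>b\<in>Basis. if b = axis i 1 then f b else 0)"
    by (intro sum.cong refl) (auto simp: inner_Basis)
  also have "\<dots> = f (axis i 1)" by simp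
  finally show ?thesis .
qed

lemma four_vec:
  fixes h1 h2 h3 h4 :: "real^'n \<Rightarrow> ennreal"
  assumes [measurable]: "h1 \<in> borel_measurable borel" "h2 \<in> borel_measurable borel"
    "h3 \<in> borel_measurable borel" "h4 \<in> borel_measurable borel"
  assumes hyp: "\<And>z w. h1 z * h2 w \<le> h3 (vmin z w) * h4 (vmax z w)"
  shows "integral\<^sup>N lborel h1 * integral\<^sup>N lborel h2 \<le> integral\<^sup>N lborel h3 * integral\<^sup>N lborel h4"
proof -
  define E :: "(real^'n \<Rightarrow> real) \<Rightarrow> real^'n" where "E f = (\<Sum>b\<in>Basis. f b *\<^sub>R b)" for f
  have Em[measurable]: "E \<in> measurable (PiM Basis (\<lambda>_. lborel)) borel"
    unfolding E_def by measurable
  have eq: "integral\<^sup>N lborel h = integral\<^sup>N (PiM Basis (\<lambda>_. lborel)) (\<lambda>f. h (E f))"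
    if [measurable]: "h \<in> borel_measurable borel" for h :: "real^'n \<Rightarrow> ennreal"
    by (subst lborel_eq) (simp add: nn_integral_distr E_def)
  have mn: "vmin (E z) (E w) = E (inf z w)" "vmax (E z) (E w) = E (sup z w)" for z w
  proof -
    have En: "E f $ i = f (axis i 1)" for f i unfolding E_def by (rule E_nth)
    show "vmin (E z) (E w) = E (inf z w)" "vmax (E z) (E w) = E (sup z w)"
      by (simp_all add: vec_eq_iff vmin_def vmax_def En inf_min sup_max)
  qed
  show ?thesis
    unfolding eq[OF assms(1)] eq[OF assms(2)] eq[OF assms(3)] eq[OF assms(4)]
    by (rule four_pi) (auto simp: hyp mn[symmetric])
qed



lemma lc_pf2_aux:
  fixes h :: "real \<Rightarrow> real"
  assumes lc: "log_concave h" and nn: "\<And>t. h t \<ge> 0"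
    and pm: "p \<le> m1" "m1 \<le> q" and sum: "m1 + m2 = p + q"
  shows "h p * h q \<le> h m1 * h m2"
proof (cases "m1 = p \<or> m1 = q")
  case True
  then show ?thesis using sum by (auto simp: mult.commute)
next
  case False
  hence pq: "p < m1" "m1 < q" using pm by auto
  define t where "t = (m1 - p) / (q - p)"
  have t: "0 < t" "t < 1" using pq by (auto simp: t_def field_simps)
  have tq: "t * (q - p) = m1 - p" using pq by (simp add: t_def)
  have m1: "m1 = (1 - t) *\<^sub>R p + t *\<^sub>R q" using tq by (simp add: algebra_simps)
  have m2: "m2 = (1 - (1 - t)) *\<^sub>R p + (1 - t) *\<^sub>R q" using tq sum by (simp add: algebra_simps)
  have h1: "h m1 \<ge> h p powr (1 - t) * h q powr t"
    using lc t unfolding log_concave_def m1 by blast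
  have h2: "h m2 \<ge> h p powr (1 - (1 - t)) * h q powr (1 - t)"
    using lc t unfolding log_concave_def m2 by (metis diff_gt_0_iff_gt diff_less_eq less_add_same_cancel1)
  have "h p * h q = (h p powr (1 - t) * h q powr t) * (h p powr (1 - (1 - t)) * h q powr (1 - t))"
  proof -
    have "h p powr (1 - t) * h p powr (1 - (1 - t)) = h p"
      using nn[of p] by (simp add: powr_add[symmetric])
    moreover have "h q powr t * h q powr (1 - t) = h q"
      using nn[of q] by (simp add: powr_add[symmetric])
    ultimately show ?thesis by (metis (no_types, lifting) mult.assoc mult.left_commute)
  qed
  also have "\<dots> \<le> h m1 * h m2"
    using h1 h2 nn[of m1] by (intro mult_mono) auto
  finally show ?thesis .
qed

lemma lc_pf2:
  fixes h :: "real \<Rightarrow> real"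
  assumes lc: "log_concave h" and nn: "\<And>t. h t \<ge> 0"
  shows "h (a - u) * h (b - v) \<le> h (min a b - min u v) * h (max a b - max u v)"
proof -
  have A: "h (a - u) * h (b - v) \<le> h (min a b - min u v) * h (max a b - max u v)"
    if "a \<le> b" for a b u v
  proof (cases "u \<le> v")
    case True then show ?thesis using that by simp
  next
    case False
    have "h (a - u) * h (b - v) \<le> h (a - v) * h (b - u)"
      using False that by (intro lc_pf2_aux[OF lc nn]) auto
    then show ?thesis using False that by simp
  qed
  show ?thesis
  proof (cases "a \<le> b")
    case True then show ?thesis by (rule A)
  next
    case False
    then have "h (b - v) * h (a - u) \<le> h (min b a - min v u) * h (max b a - max v u)"
      by (intro A) auto
    then show ?thesis by (simp add: mult.commute min.commute max.commute)
  qed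
qed

lemma seg_bound:
  fixes h :: "real \<Rightarrow> real"
  assumes lc: "log_concave h" and nn: "\<And>t. h t \<ge> 0" and int: "integrable lborel h"
    and c: "0 < c" "c \<le> h p" "c \<le> h q" and pq: "p \<noteq> q"
  shows "sqrt (c * h q) * \<bar>q - p\<bar> / 2 \<le> integral\<^sup>L lborel h"
proof -
  define M where "M = h q"
  define m where "m = (p + q) / 2"
  define S where "S = {min m q .. max m q}"
  have cM: "0 < c" "c \<le> M" using c by (auto simp: M_def)
  have ptw: "sqrt (c * M) \<le> h z" if "z \<in> S" for z
  proof -
    define t where "t = (z - p) / (q - p)"
    have tb: "1/2 \<le> t" "t \<le> 1"
      using that pq unfolding S_def t_def m_def
      by (cases "p < q"; auto simp: field_simps min_def max_def split: if_splits)+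
    have tq: "t * (q - p) = z - p" using pq by (simp add: t_def)
    have z: "z = (1 - t) *\<^sub>R p + t *\<^sub>R q" using tq by (simp add: algebra_simps)
    show ?thesis
    proof (cases "t = 1")
      case True
      then have "z = q" using z by simp
      moreover have "sqrt (c * M) \<le> sqrt (M * M)" using cM by (intro real_sqrt_le_mono mult_right_mono) auto
      ultimately show ?thesis using cM by (simp add: M_def)
    next
      case False
      with tb have t: "0 < t" "t < 1" by auto
      have "h z \<ge> h p powr (1 - t) * h q powr t"
        using lc t unfolding log_concave_def z by blast
      moreover have "h p powr (1 - t) * h q powr t \<ge> c powr (1 - t) * M powr t"
        using cM c t nn by (intro mult_mono powr_mono2) (auto simp: M_def)
      moreover have "c powr (1 - t) * M powr t \<ge> sqrt (c * M)"
      proof -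
        have "ln c \<le> ln M" using cM by simp
        hence "(ln c + ln M) / 2 \<le> (1 - t) * ln c + t * ln M"
        proof -
          have e: "(1 - t) * ln c + t * ln M - (ln c + ln M) / 2 = (t - 1/2) * (ln M - ln c)"
            by (simp add: algebra_simps divide_simps)
          have "0 \<le> (t - 1/2) * (ln M - ln c)" using tb \<open>ln c \<le> ln M\<close> by simp
          with e show ?thesis by linarith
        qed
        hence "exp ((ln c + ln M) / 2) \<le> exp ((1 - t) * ln c + t * ln M)" by simp
        moreover have "sqrt (c * M) = exp ((ln c + ln M) / 2)"
        proof (rule real_sqrt_unique)
          have "exp ((ln c + ln M) / 2) ^ 2 = exp ((ln c + ln M) / 2 + (ln c + ln M) / 2)"
            by (simp only: power2_eq_square exp_add)
          also have "\<dots> = exp (ln c + ln M)" by (rule arg_cong[where f=exp]) simp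
          also have "\<dots> = exp (ln c) * exp (ln M)" by (rule exp_add)
          also have "\<dots> = c * M" using cM by simp
          finally show "exp ((ln c + ln M) / 2) ^ 2 = c * M" .
        qed simp
        moreover have "c powr (1 - t) * M powr t = exp ((1 - t) * ln c + t * ln M)"
          using cM by (simp add: powr_def exp_add)
        ultimately show ?thesis by simp
      qed
      ultimately show ?thesis by linarith
    qed
  qed
  have hm[measurable]: "h \<in> borel_measurable borel" using int by auto
  have "ennreal (sqrt (c * M)) * emeasure lborel S = (\<integral>\<^sup>+z. ennreal (sqrt (c * M)) * indicator S z \<partial>lborel)"
    by (simp add: S_def nn_integral_cmult_indicator)
  also have "\<dots> \<le> (\<integral>\<^sup>+z. ennreal (h z) \<partial>lborel)"
    using ptw by (intro nn_integral_mono) (auto split: split_indicator intro: ennreal_leI)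
  also have "\<dots> = ennreal (integral\<^sup>L lborel h)"
    using int nn by (intro nn_integral_eq_integral) auto
  finally have *: "ennreal (sqrt (c * M)) * emeasure lborel S \<le> ennreal (integral\<^sup>L lborel h)" .
  have "emeasure lborel S = ennreal (\<bar>q - p\<bar> / 2)"
    unfolding S_def m_def by (simp add: min_def max_def abs_if field_simps)
  moreover have "ennreal (sqrt (c * M) * (\<bar>q - p\<bar> / 2)) = ennreal (sqrt (c * M)) * ennreal (\<bar>q - p\<bar> / 2)"
    using cM by (intro ennreal_mult) auto
  ultimately have "ennreal (sqrt (c * M) * (\<bar>q - p\<bar> / 2)) \<le> ennreal (integral\<^sup>L lborel h)"
    using * by simp
  moreover have "0 \<le> integral\<^sup>L lborel h" using nn by (simp add: integral_nonneg_AE)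
  ultimately show ?thesis by (simp add: M_def ennreal_le_iff)
qed

lemma lc_bounded:
  fixes h :: "real \<Rightarrow> real"
  assumes lc: "log_concave h" and nn: "\<And>t. h t \<ge> 0" and int: "integrable lborel h"
  shows "\<exists>B. \<forall>t. h t \<le> B"
proof (cases "\<exists>p1 p2. p1 < p2 \<and> 0 < h p1 \<and> 0 < h p2")
  case False
  show ?thesis
  proof (cases "\<exists>p. 0 < h p")
    case True
    then obtain p where p: "0 < h p" by blast
    have "h t \<le> h p" for t
    proof (cases "0 < h t")
      case True
      then have "t = p" using False p by (metis linorder_neqE_linordered_idom)
      then show ?thesis by simp
    next
      case False then show ?thesis using p by simp
    qed
    then show ?thesis by blast
  next
    case False
    then have "h t \<le> 0" for t by (meson not_le)
    then show ?thesis by blast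
  qed
next
  case True
  then obtain p1 p2 where p: "p1 < p2" "0 < h p1" "0 < h p2" by blast
  define c where "c = min (h p1) (h p2)"
  define \<delta> where "\<delta> = p2 - p1"
  define J where "J = integral\<^sup>L lborel h"
  have c: "0 < c" "c \<le> h p1" "c \<le> h p2" using p by (auto simp: c_def)
  have d: "0 < \<delta>" using p by (simp add: \<delta>_def)
  have "h q \<le> max c ((4 * J / \<delta>)^2 / c)" for q
  proof (cases "h q \<le> c")
    case True then show ?thesis by simp
  next
    case False
    hence cq: "c \<le> h q" by simp
    obtain pp where pp: "c \<le> h pp" "\<delta> / 2 \<le> \<bar>q - pp\<bar>"
    proof (cases "\<delta> / 2 \<le> \<bar>q - p1\<bar>")
      case True then show ?thesis using that c by blast
    next
      case False
      then have "\<delta> / 2 \<le> \<bar>q - p2\<bar>" unfolding \<delta>_def by (simp add: abs_if split: if_splits)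
      then show ?thesis using that c by blast
    qed
    have "pp \<noteq> q" using pp d by auto
    then have sb: "sqrt (c * h q) * \<bar>q - pp\<bar> / 2 \<le> J"
      unfolding J_def using seg_bound[OF lc nn int c(1) pp(1) cq] by blast
    have "sqrt (c * h q) * (\<delta> / 4) \<le> sqrt (c * h q) * \<bar>q - pp\<bar> / 2"
      using pp c cq by (subst times_divide_eq_right[symmetric], intro mult_left_mono) auto
    with sb have "sqrt (c * h q) * (\<delta> / 4) \<le> J" by linarith
    hence s: "sqrt (c * h q) \<le> 4 * J / \<delta>" using d by (simp add: field_simps)
    have "c * h q = (sqrt (c * h q))^2" using c cq by simp
    also have "\<dots> \<le> (4 * J / \<delta>)^2" using s c cq by (intro power_mono) auto
    finally have "h q * c \<le> (4 * J / \<delta>)^2" by (simp add: mult.commute)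
    hence "h q \<le> (4 * J / \<delta>)^2 / c" using c by (subst pos_le_divide_eq) auto
    then show ?thesis by simp
  qed
  then show ?thesis by blast
qed


lemma nn_integral_reflect:
  fixes F :: "real^'n \<Rightarrow> ennreal"
  assumes [measurable]: "F \<in> borel_measurable borel"
  shows "(\<integral>\<^sup>+z. F z \<partial>lborel) = (\<integral>\<^sup>+w. F (u - w) \<partial>lborel)"
proof -
  have D: "lborel = distr lborel borel (\<lambda>w. u + (-1::real) *\<^sub>R w)"
    using lborel_affine[of "-1::real" u] by (simp add: density_1)
  have "(\<integral>\<^sup>+z. F z \<partial>lborel) = (\<integral>\<^sup>+z. F z \<partial>distr lborel borel (\<lambda>w. u + (-1::real) *\<^sub>R w))"
    using arg_cong[OF D, of "\<lambda>M. integral\<^sup>N M F"] .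
  also have "\<dots> = (\<integral>\<^sup>+w. F (u - w) \<partial>lborel)"
    by (simp add: nn_integral_distr)
  finally show ?thesis .
qed

theorem theorem3p2:
  fixes f g :: "real^'n \<Rightarrow> real" and gi :: "'n \<Rightarrow> real \<Rightarrow> real"
  assumes g_prod: "\<And>z. g z = (\<Prod>i\<in>UNIV. gi i (z $ i))"
    and gi_nonneg: "\<And>i t. gi i t \<ge> 0"
    and gi_lc: "\<And>i. log_concave (gi i)"
    and gi_int: "\<And>i. integrable lborel (gi i)"
    and g_nonzero: "\<exists>z. g z \<noteq> 0"
    and f_pos: "\<And>x. f x > 0"
    and f_int: "integrable lborel f"
    and f_lsm: "log_supermodular f"
  shows "\<forall>x y. conv f g x * conv f g y \<le> conv f g (vmin x y) * conv f g (vmax x y)"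
proof (intro allI)
  fix x y :: "real^'n"
  have fm[measurable]: "f \<in> borel_measurable borel" using f_int by auto
  have gim[measurable]: "gi i \<in> borel_measurable borel" for i using gi_int[of i] by auto
  have nth_m[measurable]: "(\<lambda>z::real^'n. z $ i) \<in> borel_measurable borel" for i
    by (intro borel_measurable_continuous_onI linear_continuous_on bounded_linear_vec_nth)
  have g_eq: "g = (\<lambda>z. \<Prod>i\<in>UNIV. gi i (z $ i))" using g_prod by auto
  have gm[measurable]: "g \<in> borel_measurable borel" unfolding g_eq by measurable
  have g_nn: "0 \<le> g z" for z by (simp add: g_prod prod_nonneg gi_nonneg)
  have f_nn: "0 \<le> f z" for z using f_pos[of z] by simp
  obtain Bi where Bi: "\<And>i t. gi i t \<le> Bi i"
    using lc_bounded[OF gi_lc gi_nonneg gi_int] by metis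
  define B where "B = (\<Prod>i\<in>UNIV. Bi i)"
  have gB: "g z \<le> B" for z
    unfolding g_prod B_def by (intro prod_mono) (auto simp: gi_nonneg Bi)
  have B_nn: "0 \<le> B" using g_nn gB order_trans by blast
  define N where "N u = (\<integral>\<^sup>+w. ennreal (f w * g (u - w)) \<partial>lborel)" for u
  have conv_eq: "conv f g u = enn2real (N u)" for u
  proof -
    have "conv f g u = enn2real (\<integral>\<^sup>+z. ennreal (f (u - z) * g z) \<partial>lborel)"
      unfolding conv_def by (rule integral_eq_nn_integral) (auto simp: f_nn g_nn)
    also have "(\<integral>\<^sup>+z. ennreal (f (u - z) * g z) \<partial>lborel) = N u"
      unfolding N_def by (subst nn_integral_reflect[where u=u]) simp_all
    finally show ?thesis .
  qed
  have N_fin: "N u < top" for u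
  proof -
    have "N u \<le> (\<integral>\<^sup>+w. ennreal B * ennreal (f w) \<partial>lborel)"
      unfolding N_def
    proof (intro nn_integral_mono)
      fix w
      have "f w * g (u - w) \<le> B * f w" using gB[of "u - w"] f_nn[of w]
        by (metis mult.commute mult_left_mono)
      then show "ennreal (f w * g (u - w)) \<le> ennreal B * ennreal (f w)"
        using B_nn f_nn[of w] by (simp add: ennreal_mult[symmetric])
    qed
    also have "\<dots> = ennreal B * (\<integral>\<^sup>+w. ennreal (f w) \<partial>lborel)"
      by (simp add: nn_integral_cmult)
    also have "(\<integral>\<^sup>+w. ennreal (f w) \<partial>lborel) = ennreal (integral\<^sup>L lborel f)"
      using f_int f_nn by (intro nn_integral_eq_integral) auto
    finally have le: "N u \<le> ennreal B * ennreal (integral\<^sup>L lborel f)" .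
    have "ennreal B * ennreal (integral\<^sup>L lborel f) < top"
      by (simp add: ennreal_mult_less_top)
    with le show ?thesis by (rule le_less_trans)
  qed
  have kernel: "g (x - z) * g (y - w) \<le> g (vmin x y - vmin z w) * g (vmax x y - vmax z w)" for z w
  proof -
    have "g (x - z) * g (y - w) = (\<Prod>i\<in>UNIV. gi i (x $ i - z $ i) * gi i (y $ i - w $ i))"
      by (simp add: g_prod prod.distrib)
    also have "\<dots> \<le> (\<Prod>i\<in>UNIV. gi i (min (x $ i) (y $ i) - min (z $ i) (w $ i)) *
                                 gi i (max (x $ i) (y $ i) - max (z $ i) (w $ i)))"
      by (intro prod_mono conjI lc_pf2[OF gi_lc gi_nonneg] mult_nonneg_nonneg gi_nonneg)
    also have "\<dots> = g (vmin x y - vmin z w) * g (vmax x y - vmax z w)"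
      by (simp add: g_prod prod.distrib vmin_def vmax_def)
    finally show ?thesis .
  qed
  have hm: "(\<lambda>w. ennreal (f w * g (u - w))) \<in> borel_measurable borel" for u
    by measurable
  have four: "N x * N y \<le> N (vmin x y) * N (vmax x y)"
    unfolding N_def
  proof (rule four_vec)
    fix z w
    have "f z * g (x - z) * (f w * g (y - w)) = (f z * f w) * (g (x - z) * g (y - w))"
      by (simp only: ac_simps)
    also have "\<dots> \<le> (f (vmin z w) * f (vmax z w)) * (g (vmin x y - vmin z w) * g (vmax x y - vmax z w))"
    proof (rule mult_mono)
      show "f z * f w \<le> f (vmin z w) * f (vmax z w)" using f_lsm unfolding log_supermodular_def by blast
      show "g (x - z) * g (y - w) \<le> g (vmin x y - vmin z w) * g (vmax x y - vmax z w)" by (rule kernel)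
      show "0 \<le> f (vmin z w) * f (vmax z w)" by (intro mult_nonneg_nonneg f_nn)
      show "0 \<le> g (x - z) * g (y - w)" by (intro mult_nonneg_nonneg g_nn)
    qed
    also have "\<dots> = f (vmin z w) * g (vmin x y - vmin z w) * (f (vmax z w) * g (vmax x y - vmax z w))"
      by (simp only: ac_simps)
    finally have *: "f z * g (x - z) * (f w * g (y - w))
       \<le> f (vmin z w) * g (vmin x y - vmin z w) * (f (vmax z w) * g (vmax x y - vmax z w))" .
    show "ennreal (f z * g (x - z)) * ennreal (f w * g (y - w))
      \<le> ennreal (f (vmin z w) * g (vmin x y - vmin z w)) * ennreal (f (vmax z w) * g (vmax x y - vmax z w))"
    proof -
      have e1: "ennreal (f z * g (x - z)) * ennreal (f w * g (y - w)) = ennreal (f z * g (x - z) * (f w * g (y - w)))"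
        by (rule ennreal_mult[symmetric]) (intro mult_nonneg_nonneg f_nn g_nn)+
      have e2: "ennreal (f (vmin z w) * g (vmin x y - vmin z w)) * ennreal (f (vmax z w) * g (vmax x y - vmax z w))
         = ennreal (f (vmin z w) * g (vmin x y - vmin z w) * (f (vmax z w) * g (vmax x y - vmax z w)))"
        by (rule ennreal_mult[symmetric]) (intro mult_nonneg_nonneg f_nn g_nn)+
      show ?thesis using ennreal_leI[OF *] by (simp only: e1 e2)
    qed
  qed (rule hm)+
  have "conv f g x * conv f g y = enn2real (N x * N y)"
    by (simp add: conv_eq enn2real_mult)
  also have "\<dots> \<le> enn2real (N (vmin x y) * N (vmax x y))"
    using four N_fin by (intro enn2real_mono) (auto simp: ennreal_mult_less_top)
  also have "\<dots> = conv f g (vmin x y) * conv f g (vmax x y)"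
    by (simp add: conv_eq enn2real_mult)
  finally show "conv f g x * conv f g y \<le> conv f g (vmin x y) * conv f g (vmax x y)" .
qed

end
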